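(* Consider a restless bandit and a set system $(N^{\{0,1\}},\mathcal F)$ as in the context, and suppose the bandit is PCL-indexable relative to the activity measure $b^u$ and $\mathcal F$-policies, with index vector $(\nu_j)_{j\in N^{\{0,1\}}}$ produced by the adaptive-greedy algorithm on input $\widehat{\mathbf h}^0_{N^{\{0,1\}}}$. Then the $\nu$-charge problem is indexable relative to $\mathcal F$-policies, and the dynamic allocation index of each controllable state $j\in N^{\{0,1\}}$ is $\nu_j$; that is, for every $\nu\in\mathbb R$, $S(\nu)=\{j\in N^{\{0,1\}}:\nu\le\nu_j\}\in\mathcal F$.
   Context: Restless bandit: finite state space $N=N^{\{0,1\}}\cup N^{\{1\}}$ (disjoint; controllable and uncontrollable states); actions $a\in\{0,1\}$ (passive/active); one-period costs $h^a_i$, transition probabilities $p^a_{ij}$ with $p^1_{ij}=p^0_{ij}$ for $i\in N^{\{1\}}$; discount factor $\beta\in(0,1)$; activity weights $\theta^1_j>0$. Stationary policies $u:N\to[0,1]$ ($u(i)$ = probability of the active action) with $u(i)=1$ on $N^{\{1\}}$. With $X(t)$ the state and $a(t)$ the action at period $t$: $v^u_i=E^u_i[\sum_{t\ge0}h^{a(t)}_{X(t)}\beta^t]$, $b^u_i=E^u_i[\sum_{t\ge0}\theta^1_{X(t)}a(t)\beta^t]$. For $S\subseteq N^{\{0,1\}}$ the $S$-active policy is active on $S\cup N^{\{1\}}$ and passive elsewhere; $v^S_i,b^S_i$ its measures. The $\nu$-charge problem: $v_i(\nu)=\min_u\{v^u_i+\nu b^u_i\}$; $S(\nu)$ denotes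 the set of $j\in N^{\{0,1\}}$ where the active action attains the minimum in the dynamic programming equation $v_j(\nu)=\min_{a}\{h^a_j+\nu\theta^1_j a+\beta\sum_k p^a_{jk}v_k(\nu)\}$. Marginal workloads: $w^S_i=\theta^1_i 1\{i\in N^{\{0,1\}}\}+\beta\sum_{j}(p^1_{ij}-p^0_{ij})b^S_j$. Normalized passive-cost vector: $\widehat{\mathbf h}^0=\mathbf h^0-(\mathbf I-\beta\mathbf P^0)(\mathbf I-\beta\mathbf P^1)^{-1}\mathbf h^1$. Set system: $\mathcal F\subseteq 2^{N^{\{0,1\}}}$ with $\emptyset\in\mathcal F$; every nonempty $S\in\mathcal F$ has nonempty inner boundary $\partial^-S=\{j\in S:S\setminus\{j\}\in\mathcal F\}$; every $S\in\mathcal F$, $S\ne N^{\{0,1\}}$, has some $j\notin S$ with $S\cup\{j\}\in\mathcal F$. An $\mathcal F$-policy is an $S$-active policy with $S\in\mathcal F$. Indexability relative to $\mathcal F$-policies: as $\nu$ increases from $-\infty$ to $+\infty$, $S(\nu)$ decreases monotonically from $N^{\{0,1\}}$ to $\emptyset$, with $S(\nu)\in\mathcal F$ for all $\nu$; the dynamic allocation index of $j$ is the critical charge $\nu_j$ with $S(\nu)=\{j:\nu\le\nu_j\}$. Adaptive-greedy algorithm on input $\mathbf c=(c_j)_{j\in N^{\{0,1\}}}$, with $n=|N^{\{0,1\}}|$: set $S_1=N^{\{0,1\}}$, $y^{S_1}=\min\{c_j/w^{S_1}_j: j\in\partial^-S_1\}$, $\pi_1$ a minimizer, $\nu_{\pi_1}=y^{S_1}$;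 for $k=2,\dots,n$: $S_k=S_{k-1}\setminus\{\pi_{k-1}\}$, $y^{S_k}=\min\{(c_j-\sum_{l=1}^{k-1}y^{S_l}w^{S_l}_j)/w^{S_k}_j: j\in\partial^-S_k\}$, $\pi_k$ a minimizer, $\nu_{\pi_k}=\nu_{\pi_{k-1}}+y^{S_k}$. PCL-indexability: (i) $w^S_j>0$ for all $S\in\mathcal F$, $j\in N^{\{0,1\}}$; (ii) the algorithm on input $\widehat{\mathbf h}^0_{N^{\{0,1\}}}=(\widehat h^0_j)_{j\in N^{\{0,1\}}}$ yields $\nu_{\pi_1}\le\cdots\le\nu_{\pi_n}$. *)

theory Defs
  imports Complex_Main
begin

fun mpow :: "('s::finite \<Rightarrow> 's \<Rightarrow> real) \<Rightarrow> nat \<Rightarrow> 's \<Rightarrow> 's \<Rightarrow> real" where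
  "mpow P 0 = (\<lambda>i j. if i = j then 1 else 0)"
| "mpow P (Suc t) = (\<lambda>i j. \<Sum>k\<in>UNIV. mpow P t i k * P k j)"

text \<open>Expected total discounted reward E_i[sum_t r(X(t)) beta^t] for the Markov chain
  with transition matrix P started at i (written out via the t-step probabilities).\<close>

definition disc_total :: "real \<Rightarrow> ('s::finite \<Rightarrow> 's \<Rightarrow> real) \<Rightarrow> ('s \<Rightarrow> real) \<Rightarrow> 's \<Rightarrow> real" where
  "disc_total \<beta> P r i = (\<Sum>t. \<beta> ^ t * (\<Sum>j\<in>UNIV. mpow P t i j * r j))"

text \<open>A stationary policy u gives the probability u(i) of the active action in state i.\<close>

definition admissible :: "'s set \<Rightarrow> ('s \<Rightarrow> real) \<Rightarrow> bool" where
  "admissible N1 u \<longleftrightarrow> (\<forall>i. 0 \<le> u i \<and> u i \<le> 1) \<and> (\<forall>i\<in>N1. u i = 1)"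

definition pol_P :: "('s \<Rightarrow> 's \<Rightarrow> real) \<Rightarrow> ('s \<Rightarrow> 's \<Rightarrow> real) \<Rightarrow> ('s \<Rightarrow> real) \<Rightarrow> 's \<Rightarrow> 's \<Rightarrow> real" where
  "pol_P P0 P1 u i j = u i * P1 i j + (1 - u i) * P0 i j"

text \<open>v^u: expected total discounted cost; b^u: expected total discounted activity.\<close>

definition cost_meas :: "real \<Rightarrow> ('s::finite \<Rightarrow> 's \<Rightarrow> real) \<Rightarrow> ('s \<Rightarrow> 's \<Rightarrow> real) \<Rightarrow>
    ('s \<Rightarrow> real) \<Rightarrow> ('s \<Rightarrow> real) \<Rightarrow> ('s \<Rightarrow> real) \<Rightarrow> 's \<Rightarrow> real" where
  "cost_meas \<beta> P0 P1 h0 h1 u = disc_total \<beta> (pol_P P0 P1 u) (\<lambda>i. u i * h1 i + (1 - u i) * h0 i)"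

definition work_meas :: "real \<Rightarrow> ('s::finite \<Rightarrow> 's \<Rightarrow> real) \<Rightarrow> ('s \<Rightarrow> 's \<Rightarrow> real) \<Rightarrow>
    ('s \<Rightarrow> real) \<Rightarrow> ('s \<Rightarrow> real) \<Rightarrow> 's \<Rightarrow> real" where
  "work_meas \<beta> P0 P1 \<theta> u = disc_total \<beta> (pol_P P0 P1 u) (\<lambda>i. \<theta> i * u i)"

definition S_active :: "'s set \<Rightarrow> 's set \<Rightarrow> 's \<Rightarrow> real" where
  "S_active N1 S = (\<lambda>i. if i \<in> S \<union> N1 then 1 else 0)"

definition vopt :: "'s set \<Rightarrow> real \<Rightarrow> ('s::finite \<Rightarrow> 's \<Rightarrow> real) \<Rightarrow> ('s \<Rightarrow> 's \<Rightarrow> real) \<Rightarrow>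
    ('s \<Rightarrow> real) \<Rightarrow> ('s \<Rightarrow> real) \<Rightarrow> ('s \<Rightarrow> real) \<Rightarrow> real \<Rightarrow> 's \<Rightarrow> real" where
  "vopt N1 \<beta> P0 P1 h0 h1 \<theta> \<nu> i =
     (INF u \<in> {u. admissible N1 u}. cost_meas \<beta> P0 P1 h0 h1 u i + \<nu> * work_meas \<beta> P0 P1 \<theta> u i)"

text \<open>S(nu): controllable states where the active action attains the minimum in the
  dynamic programming equation.\<close>

definition S_charge :: "'s set \<Rightarrow> 's set \<Rightarrow> real \<Rightarrow> ('s::finite \<Rightarrow> 's \<Rightarrow> real) \<Rightarrow> ('s \<Rightarrow> 's \<Rightarrow> real) \<Rightarrow>
    ('s \<Rightarrow> real) \<Rightarrow> ('s \<Rightarrow> real) \<Rightarrow> ('s \<Rightarrow> real) \<Rightarrow> real \<Rightarrow> 's set" where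
  "S_charge N01 N1 \<beta> P0 P1 h0 h1 \<theta> \<nu> =
     (let v = vopt N1 \<beta> P0 P1 h0 h1 \<theta> \<nu> in
      {j \<in> N01. h1 j + \<nu> * \<theta> j + \<beta> * (\<Sum>k\<in>UNIV. P1 j k * v k)
                \<le> h0 j + \<beta> * (\<Sum>k\<in>UNIV. P0 j k * v k)})"

definition marg_work :: "'s set \<Rightarrow> 's set \<Rightarrow> real \<Rightarrow> ('s::finite \<Rightarrow> 's \<Rightarrow> real) \<Rightarrow> ('s \<Rightarrow> 's \<Rightarrow> real) \<Rightarrow>
    ('s \<Rightarrow> real) \<Rightarrow> 's set \<Rightarrow> 's \<Rightarrow> real" where
  "marg_work N01 N1 \<beta> P0 P1 \<theta> S i =
     \<theta> i * (if i \<in> N01 then 1 else 0)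
     + \<beta> * (\<Sum>j\<in>UNIV. (P1 i j - P0 i j) * work_meas \<beta> P0 P1 \<theta> (S_active N1 S) j)"

definition resolvent :: "real \<Rightarrow> ('s::finite \<Rightarrow> 's \<Rightarrow> real) \<Rightarrow> ('s \<Rightarrow> real) \<Rightarrow> 's \<Rightarrow> real" where
  "resolvent \<beta> P r = (THE x. \<forall>i. x i - \<beta> * (\<Sum>j\<in>UNIV. P i j * x j) = r i)"

definition hhat0 :: "real \<Rightarrow> ('s::finite \<Rightarrow> 's \<Rightarrow> real) \<Rightarrow> ('s \<Rightarrow> 's \<Rightarrow> real) \<Rightarrow>
    ('s \<Rightarrow> real) \<Rightarrow> ('s \<Rightarrow> real) \<Rightarrow> 's \<Rightarrow> real" where
  "hhat0 \<beta> P0 P1 h0 h1 i =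
     (let x = resolvent \<beta> P1 h1 in h0 i - (x i - \<beta> * (\<Sum>j\<in>UNIV. P0 i j * x j)))"

definition inner_boundary :: "'s set set \<Rightarrow> 's set \<Rightarrow> 's set" where
  "inner_boundary F S = {j \<in> S. S - {j} \<in> F}"

definition set_system :: "'s set \<Rightarrow> 's set set \<Rightarrow> bool" where
  "set_system N01 F \<longleftrightarrow> F \<subseteq> Pow N01 \<and> {} \<in> F
     \<and> (\<forall>S\<in>F. S \<noteq> {} \<longrightarrow> inner_boundary F S \<noteq> {})
     \<and> (\<forall>S\<in>F. S \<noteq> N01 \<longrightarrow> (\<exists>j\<in>N01 - S. insert j S \<in> F))"

text \<open>A run of the adaptive-greedy algorithm on input c, with n = card N01:
  pi k is the state chosen at step k (k = 1..n), y k the value y^{S_k},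
  S_k = N01 - {pi 1, ..., pi (k-1)}.\<close>

definition ag_set :: "'s set \<Rightarrow> (nat \<Rightarrow> 's) \<Rightarrow> nat \<Rightarrow> 's set" where
  "ag_set N01 \<pi> k = N01 - \<pi> ` {1..<k}"

definition adaptive_greedy_run :: "'s set \<Rightarrow> 's set set \<Rightarrow> ('s set \<Rightarrow> 's \<Rightarrow> real) \<Rightarrow> ('s \<Rightarrow> real)
    \<Rightarrow> (nat \<Rightarrow> 's) \<Rightarrow> (nat \<Rightarrow> real) \<Rightarrow> bool" where
  "adaptive_greedy_run N01 F w c \<pi> y \<longleftrightarrow>
     (\<forall>k\<in>{1..card N01}.
        let S = ag_set N01 \<pi> k;
            r = (\<lambda>j. (c j - (\<Sum>l\<in>{1..<k}. y l * w (ag_set N01 \<pi> l) j)) / w S j)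
        in \<pi> k \<in> inner_boundary F S \<and> y k = r (\<pi> k)
           \<and> (\<forall>j\<in>inner_boundary F S. y k \<le> r j))"

text \<open>Index computed by the algorithm: nu_{pi k} = y^{S_1} + ... + y^{S_k}.\<close>

definition ag_index :: "(nat \<Rightarrow> real) \<Rightarrow> nat \<Rightarrow> real" where
  "ag_index y k = (\<Sum>l\<in>{1..k}. y l)"

end

theory Submission
  imports Defs
begin


lemma stoch_min:
  fixes Q :: "'s::finite \<Rightarrow> 's \<Rightarrow> real" and D :: "'s \<Rightarrow> real"
  assumes Qn: "\<forall>i j. 0 \<le> Q i j" and Qs: "\<forall>i. (\<Sum>j\<in>UNIV. Q i j) = 1"
    and b: "0 \<le> \<beta>" "\<beta> < 1"
    and D: "\<forall>i. \<beta> * (\<Sum>j\<in>UNIV. Q i j * D j) \<le> D i"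
  shows "0 \<le> D i"
proof -
  define m where "m = Min (range D)"
  have fin: "finite (range D)" by simp
  have mle: "\<And>j. m \<le> D j" unfolding m_def using fin by (intro Min_le) auto
  have "m \<in> range D" unfolding m_def using fin by (intro Min_in) auto
  then obtain i0 where i0: "D i0 = m" by auto
  have "(\<Sum>j\<in>UNIV. Q i0 j * m) \<le> (\<Sum>j\<in>UNIV. Q i0 j * D j)"
    by (intro sum_mono mult_left_mono mle) (use Qn in auto)
  moreover have "(\<Sum>j\<in>UNIV. Q i0 j * m) = m" using Qs by (simp add: sum_distrib_right[symmetric])
  ultimately have "\<beta> * m \<le> \<beta> * (\<Sum>j\<in>UNIV. Q i0 j * D j)" using b by (simp add: mult_left_mono)
  also have "\<dots> \<le> m" using D i0 by metis
  finally have "(1 - \<beta>) * m \<ge> 0" by (simp add: algebra_simps)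
  then have "m \<ge> 0" using b by (simp add: zero_le_mult_iff)
  then show ?thesis using mle[of i] by linarith
qed

lemma stoch_unique:
  fixes Q :: "'s::finite \<Rightarrow> 's \<Rightarrow> real" and D :: "'s \<Rightarrow> real"
  assumes Qn: "\<forall>i j. 0 \<le> Q i j" and Qs: "\<forall>i. (\<Sum>j\<in>UNIV. Q i j) = 1"
    and b: "0 \<le> \<beta>" "\<beta> < 1"
    and D: "\<forall>i. D i = \<beta> * (\<Sum>j\<in>UNIV. Q i j * D j)"
  shows "D i = 0"
proof -
  have "0 \<le> D i"
  proof (rule stoch_min[OF Qn Qs b, of D], intro allI)
    fix i show "\<beta> * (\<Sum>j\<in>UNIV. Q i j * D j) \<le> D i"
      using D[rule_format, of i] by linarith
  qed
  moreover have "0 \<le> - D i"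
  proof (rule stoch_min[OF Qn Qs b, of "\<lambda>i. - D i"], intro allI)
    fix i show "\<beta> * (\<Sum>j\<in>UNIV. Q i j * - D j) \<le> - D i"
    proof -
      have "\<beta> * (\<Sum>j\<in>UNIV. Q i j * - D j) = - (\<beta> * (\<Sum>j\<in>UNIV. Q i j * D j))" by (simp add: sum_negf)
      then show ?thesis using D[rule_format, of i] by linarith
    qed
  qed
  ultimately show ?thesis by simp
qed

lemma mpow_left: "mpow P (Suc t) i j = (\<Sum>k\<in>UNIV. P i k * mpow P t k j)"
proof (induction t arbitrary: j)
  case 0
  then show ?case by (simp add: if_distrib[where f="\<lambda>x. x * _"] if_distrib[where f="\<lambda>x. _ * x"] cong: if_cong)
next
  case (Suc t)
  have "mpow P (Suc (Suc t)) i j = (\<Sum>k\<in>UNIV. mpow P (Suc t) i k * P k j)" by simp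
  also have "\<dots> = (\<Sum>k\<in>UNIV. (\<Sum>l\<in>UNIV. P i l * mpow P t l k) * P k j)"
    by (simp only: Suc.IH)
  also have "\<dots> = (\<Sum>l\<in>UNIV. P i l * (\<Sum>k\<in>UNIV. mpow P t l k * P k j))"
    by (simp add: sum_distrib_right sum_distrib_left mult.assoc) (rule sum.swap)
  also have "\<dots> = (\<Sum>l\<in>UNIV. P i l * mpow P (Suc t) l j)" by simp
  finally show ?case .
qed

lemma mpow_stoch:
  fixes P :: "'s::finite \<Rightarrow> 's \<Rightarrow> real"
  assumes Pn: "\<forall>i j. 0 \<le> P i j" and Ps: "\<forall>i. (\<Sum>j\<in>UNIV. P i j) = 1"
  shows "(\<forall>i j. 0 \<le> mpow P t i j) \<and> (\<forall>i. (\<Sum>j\<in>UNIV. mpow P t i j) = 1)"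
proof (induction t)
  case 0
  then show ?case by simp
next
  case (Suc t)
  have "\<forall>i j. 0 \<le> mpow P (Suc t) i j" using Suc Pn by (auto intro!: sum_nonneg)
  moreover have "(\<Sum>j\<in>UNIV. mpow P (Suc t) i j) = 1" for i
  proof -
    have "(\<Sum>j\<in>UNIV. mpow P (Suc t) i j) = (\<Sum>k\<in>UNIV. mpow P t i k * (\<Sum>j\<in>UNIV. P k j))"
      by (simp add: sum_distrib_left) (rule sum.swap)
    also have "\<dots> = 1" using Ps Suc by simp
    finally show ?thesis .
  qed
  ultimately show ?case by blast
qed

lemma mpow_bound:
  fixes P :: "'s::finite \<Rightarrow> 's \<Rightarrow> real"
  assumes Pn: "\<forall>i j. 0 \<le> P i j" and Ps: "\<forall>i. (\<Sum>j\<in>UNIV. P i j) = 1"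
  shows "\<bar>\<Sum>j\<in>UNIV. mpow P t i j * r j\<bar> \<le> (\<Sum>k\<in>UNIV. \<bar>r k\<bar>)"
proof -
  note st = mpow_stoch[OF Pn Ps, of t]
  have "\<bar>\<Sum>j\<in>UNIV. mpow P t i j * r j\<bar> \<le> (\<Sum>j\<in>UNIV. \<bar>mpow P t i j * r j\<bar>)"
    by (rule sum_abs)
  also have "\<dots> \<le> (\<Sum>j\<in>UNIV. mpow P t i j * (\<Sum>k\<in>UNIV. \<bar>r k\<bar>))"
  proof (intro sum_mono)
    fix j
    have "\<bar>r j\<bar> \<le> (\<Sum>k\<in>UNIV. \<bar>r k\<bar>)" by (rule member_le_sum) auto
    then show "\<bar>mpow P t i j * r j\<bar> \<le> mpow P t i j * (\<Sum>k\<in>UNIV. \<bar>r k\<bar>)"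
      using st by (simp add: abs_mult mult_left_mono)
  qed
  also have "\<dots> = (\<Sum>k\<in>UNIV. \<bar>r k\<bar>)" using st by (simp add: sum_distrib_right[symmetric])
  finally show ?thesis .
qed

lemma disc_fix:
  fixes P :: "'s::finite \<Rightarrow> 's \<Rightarrow> real"
  assumes Pn: "\<forall>i j. 0 \<le> P i j" and Ps: "\<forall>i. (\<Sum>j\<in>UNIV. P i j) = 1"
    and b: "0 \<le> \<beta>" "\<beta> < 1"
  shows "disc_total \<beta> P r i = r i + \<beta> * (\<Sum>j\<in>UNIV. P i j * disc_total \<beta> P r j)"
proof -
  define a where "a t i = \<beta> ^ t * (\<Sum>j\<in>UNIV. mpow P t i j * r j)" for t i
  define B where "B = (\<Sum>k\<in>UNIV. \<bar>r k\<bar>)"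
  have sm: "summable (\<lambda>t. a t i)" for i
  proof (rule summable_comparison_test)
    show "\<exists>N. \<forall>n\<ge>N. norm (a n i) \<le> B * \<beta> ^ n"
      using mpow_bound[OF Pn Ps] b unfolding a_def B_def
      by (auto simp: abs_mult mult.commute intro!: mult_left_mono)
    show "summable (\<lambda>n. B * \<beta> ^ n)" using b by (intro summable_mult summable_geometric) auto
  qed
  have a0: "a 0 i = r i" for i by (simp add: a_def if_distrib[where f="\<lambda>x. x * _"] cong: if_cong)
  have aS: "a (Suc t) i = \<beta> * (\<Sum>k\<in>UNIV. P i k * a t k)" for t i
  proof -
    have "a (Suc t) i = \<beta> * \<beta> ^ t * (\<Sum>j\<in>UNIV. (\<Sum>k\<in>UNIV. P i k * mpow P t k j) * r j)"
      unfolding a_def by (simp only: mpow_left power_Suc)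
    also have "\<dots> = \<beta> * (\<Sum>k\<in>UNIV. P i k * a t k)"
      unfolding a_def
      by (simp add: sum_distrib_right sum_distrib_left mult.assoc mult.left_commute) (rule sum.swap)
    finally show ?thesis .
  qed
  have "disc_total \<beta> P r i = (\<Sum>t. a t i)" unfolding disc_total_def a_def by simp
  also have "\<dots> = (\<Sum>t. a (Suc t) i) + a 0 i" using suminf_split_head[OF sm[of i]] by simp
  also have "(\<Sum>t. a (Suc t) i) = (\<Sum>t. \<beta> * (\<Sum>k\<in>UNIV. P i k * a t k))" by (simp add: aS)
  also have "\<dots> = \<beta> * (\<Sum>t. (\<Sum>k\<in>UNIV. P i k * a t k))"
    by (rule suminf_mult) (auto intro!: summable_sum summable_mult sm)
  also have "(\<Sum>t. (\<Sum>k\<in>UNIV. P i k * a t k)) = (\<Sum>k\<in>UNIV. (\<Sum>t. P i k * a t k))"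
    by (rule suminf_sum) (auto intro!: summable_mult sm)
  also have "\<dots> = (\<Sum>k\<in>UNIV. P i k * (\<Sum>t. a t k))"
    by (intro sum.cong refl suminf_mult sm)
  also have "(\<lambda>k. (\<Sum>t. a t k)) = disc_total \<beta> P r" unfolding disc_total_def a_def by auto
  finally show ?thesis using a0 by simp
qed



locale rb =
  fixes N01 N1 :: "'s::finite set" and \<beta> :: real and P0 P1 :: "'s \<Rightarrow> 's \<Rightarrow> real"
    and h0 h1 \<theta> :: "'s \<Rightarrow> real"
  assumes part1: "N01 \<inter> N1 = {}" and part2: "N01 \<union> N1 = UNIV"
    and b0: "0 < \<beta>" and b1: "\<beta> < 1"
    and P0n: "\<forall>i j. 0 \<le> P0 i j" and P0s: "\<forall>i. (\<Sum>j\<in>UNIV. P0 i j) = 1"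
    and P1n: "\<forall>i j. 0 \<le> P1 i j" and P1s: "\<forall>i. (\<Sum>j\<in>UNIV. P1 i j) = 1"
    and unc: "\<forall>i\<in>N1. \<forall>j. P1 i j = P0 i j"
begin

definition V :: "'s set \<Rightarrow> real \<Rightarrow> 's \<Rightarrow> real" where
  "V S \<nu> i = cost_meas \<beta> P0 P1 h0 h1 (S_active N1 S) i + \<nu> * work_meas \<beta> P0 P1 \<theta> (S_active N1 S) i"
definition Act :: "'s set \<Rightarrow> real \<Rightarrow> 's \<Rightarrow> real" where
  "Act S \<nu> j = h1 j + \<nu> * \<theta> j + \<beta> * (\<Sum>k\<in>UNIV. P1 j k * V S \<nu> k)"
definition Pas :: "'s set \<Rightarrow> real \<Rightarrow> 's \<Rightarrow> real" where
  "Pas S \<nu> j = h0 j + \<beta> * (\<Sum>k\<in>UNIV. P0 j k * V S \<nu> k)"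
definition Dl :: "'s set \<Rightarrow> real \<Rightarrow> 's \<Rightarrow> real" where
  "Dl S \<nu> j = Act S \<nu> j - Pas S \<nu> j"

lemma polP_stoch:
  assumes "\<forall>i. 0 \<le> u i \<and> u i \<le> 1"
  shows "\<forall>i j. 0 \<le> pol_P P0 P1 u i j" "\<forall>i. (\<Sum>j\<in>UNIV. pol_P P0 P1 u i j) = 1"
proof -
  show "\<forall>i j. 0 \<le> pol_P P0 P1 u i j"
    using assms P0n P1n unfolding pol_P_def by (auto intro!: add_nonneg_nonneg mult_nonneg_nonneg)
  show "\<forall>i. (\<Sum>j\<in>UNIV. pol_P P0 P1 u i j) = 1"
    using P0s P1s unfolding pol_P_def by (simp add: sum.distrib sum_distrib_left[symmetric])
qed

lemma meas_fix:
  assumes u: "\<forall>i. 0 \<le> u i \<and> u i \<le> 1"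
  shows "cost_meas \<beta> P0 P1 h0 h1 u i + \<nu> * work_meas \<beta> P0 P1 \<theta> u i
     = u i * (h1 i + \<nu> * \<theta> i + \<beta> * (\<Sum>k\<in>UNIV. P1 i k * (cost_meas \<beta> P0 P1 h0 h1 u k + \<nu> * work_meas \<beta> P0 P1 \<theta> u k)))
     + (1 - u i) * (h0 i + \<beta> * (\<Sum>k\<in>UNIV. P0 i k * (cost_meas \<beta> P0 P1 h0 h1 u k + \<nu> * work_meas \<beta> P0 P1 \<theta> u k)))"
proof -
  note st = polP_stoch[OF u]
  have bb: "0 \<le> \<beta>" "\<beta> < 1" using b0 b1 by auto
  define c where "c = cost_meas \<beta> P0 P1 h0 h1 u"
  define w where "w = work_meas \<beta> P0 P1 \<theta> u"
  have c: "c i = (u i * h1 i + (1 - u i) * h0 i) + \<beta> * (\<Sum>k\<in>UNIV. pol_P P0 P1 u i k * c k)"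
    unfolding c_def cost_meas_def by (rule disc_fix[OF st bb])
  have w: "w i = \<theta> i * u i + \<beta> * (\<Sum>k\<in>UNIV. pol_P P0 P1 u i k * w k)"
    unfolding w_def work_meas_def by (rule disc_fix[OF st bb])
  have s2: "(\<Sum>k\<in>UNIV. pol_P P0 P1 u i k * (c k + \<nu> * w k))
      = (\<Sum>k\<in>UNIV. pol_P P0 P1 u i k * c k) + \<nu> * (\<Sum>k\<in>UNIV. pol_P P0 P1 u i k * w k)"
    by (simp add: distrib_left sum.distrib sum_distrib_left mult.left_commute)
  have s: "(\<Sum>k\<in>UNIV. pol_P P0 P1 u i k * (c k + \<nu> * w k))
      = u i * (\<Sum>k\<in>UNIV. P1 i k * (c k + \<nu> * w k)) + (1 - u i) * (\<Sum>k\<in>UNIV. P0 i k * (c k + \<nu> * w k))"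
    unfolding pol_P_def sum_distrib_left sum.distrib[symmetric] by (rule sum.cong) (auto simp: algebra_simps)
  have "c i + \<nu> * w i = (u i * h1 i + (1 - u i) * h0 i) + \<nu> * (\<theta> i * u i)
      + \<beta> * (\<Sum>k\<in>UNIV. pol_P P0 P1 u i k * (c k + \<nu> * w k))"
    unfolding s2 by (subst c, subst w) (simp add: algebra_simps)
  also have "\<dots> = u i * (h1 i + \<nu> * \<theta> i + \<beta> * (\<Sum>k\<in>UNIV. P1 i k * (c k + \<nu> * w k)))
     + (1 - u i) * (h0 i + \<beta> * (\<Sum>k\<in>UNIV. P0 i k * (c k + \<nu> * w k)))"
    unfolding s by (simp add: algebra_simps)
  finally show ?thesis unfolding c_def w_def .
qed

lemma Sact_range: "\<forall>i. 0 \<le> S_active N1 S i \<and> S_active N1 S i \<le> 1"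
  unfolding S_active_def by auto

lemma V_eq: "V S \<nu> i = (if i \<in> S \<union> N1 then Act S \<nu> i else Pas S \<nu> i)"
  unfolding V_def Act_def Pas_def
  by (subst meas_fix[OF Sact_range]) (simp add: V_def S_active_def)

lemma Dl_affine0:
  "Dl S \<nu> j = h1 j - h0 j + \<beta> * (\<Sum>k\<in>UNIV. (P1 j k - P0 j k) * V S 0 k)
     + \<nu> * (\<theta> j + \<beta> * (\<Sum>k\<in>UNIV. (P1 j k - P0 j k) * work_meas \<beta> P0 P1 \<theta> (S_active N1 S) k))"
  unfolding Dl_def Act_def Pas_def V_def
  by (simp add: algebra_simps sum.distrib sum_distrib_left sum_subtractf)

lemma Dl_affine:
  assumes "j \<in> N01"
  shows "Dl S \<nu> j = Dl S \<mu> j + (\<nu> - \<mu>) * marg_work N01 N1 \<beta> P0 P1 \<theta> S j"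
  using assms unfolding Dl_affine0[of S \<nu>] Dl_affine0[of S \<mu>] marg_work_def
  by (simp add: algebra_simps)

lemma bellman:
  assumes H: "\<forall>j\<in>N01. V S \<nu> j \<le> Act S \<nu> j \<and> V S \<nu> j \<le> Pas S \<nu> j"
  shows "vopt N1 \<beta> P0 P1 h0 h1 \<theta> \<nu> = V S \<nu>"
proof
  fix i
  have bb: "0 \<le> \<beta>" "\<beta> < 1" using b0 b1 by auto
  have low: "V S \<nu> i \<le> cost_meas \<beta> P0 P1 h0 h1 u i + \<nu> * work_meas \<beta> P0 P1 \<theta> u i"
    if adm: "admissible N1 u" for u
  proof -
    have u: "\<forall>i. 0 \<le> u i \<and> u i \<le> 1" using adm unfolding admissible_def by auto
    define W where "W k = cost_meas \<beta> P0 P1 h0 h1 u k + \<nu> * work_meas \<beta> P0 P1 \<theta> u k" for k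
    define D where "D k = W k - V S \<nu> k" for k
    have "\<forall>k. \<beta> * (\<Sum>j\<in>UNIV. pol_P P0 P1 u k j * D j) \<le> D k"
    proof
      fix k
      have Wk: "W k = u k * (h1 k + \<nu> * \<theta> k + \<beta> * (\<Sum>j\<in>UNIV. P1 k j * W j))
          + (1 - u k) * (h0 k + \<beta> * (\<Sum>j\<in>UNIV. P0 k j * W j))"
        unfolding W_def by (rule meas_fix[OF u])
      have Vk: "V S \<nu> k \<le> u k * Act S \<nu> k + (1 - u k) * Pas S \<nu> k"
      proof (cases "k \<in> N1")
        case True
        then have "u k = 1" using adm unfolding admissible_def by auto
        then show ?thesis using V_eq[of S \<nu> k] True by simp
      next
        case False
        then have "k \<in> N01" using part2 by auto
        then have "V S \<nu> k \<le> Act S \<nu> k" "V S \<nu> k \<le> Pas S \<nu> k" using H by auto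
        then have "u k * V S \<nu> k + (1 - u k) * V S \<nu> k \<le> u k * Act S \<nu> k + (1 - u k) * Pas S \<nu> k"
          using u by (intro add_mono mult_left_mono) auto
        then show ?thesis by (simp add: algebra_simps)
      qed
      define SW1 where "SW1 = (\<Sum>j\<in>UNIV. P1 k j * W j)"
      define SW0 where "SW0 = (\<Sum>j\<in>UNIV. P0 k j * W j)"
      define SV1 where "SV1 = (\<Sum>j\<in>UNIV. P1 k j * V S \<nu> j)"
      define SV0 where "SV0 = (\<Sum>j\<in>UNIV. P0 k j * V S \<nu> j)"
      have sQ: "(\<Sum>j\<in>UNIV. pol_P P0 P1 u k j * D j) = u k * (SW1 - SV1) + (1 - u k) * (SW0 - SV0)"
      proof -
        have "(\<Sum>j\<in>UNIV. pol_P P0 P1 u k j * D j)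
           = (\<Sum>j\<in>UNIV. u k * (P1 k j * W j) - u k * (P1 k j * V S \<nu> j)
                + ((1 - u k) * (P0 k j * W j) - (1 - u k) * (P0 k j * V S \<nu> j)))"
          unfolding pol_P_def D_def by (rule sum.cong) (auto simp: algebra_simps)
        also have "\<dots> = u k * (SW1 - SV1) + (1 - u k) * (SW0 - SV0)"
          unfolding SW1_def SW0_def SV1_def SV0_def
          by (simp only: sum.distrib sum_subtractf sum_distrib_left[symmetric] right_diff_distrib)
        finally show ?thesis .
      qed
      have Wk': "W k = u k * (h1 k + \<nu> * \<theta> k + \<beta> * SW1) + (1 - u k) * (h0 k + \<beta> * SW0)"
        using Wk unfolding SW1_def SW0_def .
      have Vk': "V S \<nu> k \<le> u k * (h1 k + \<nu> * \<theta> k + \<beta> * SV1) + (1 - u k) * (h0 k + \<beta> * SV0)"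
        using Vk unfolding SV1_def SV0_def Act_def Pas_def .
      have "D k - \<beta> * (\<Sum>j\<in>UNIV. pol_P P0 P1 u k j * D j)
          = u k * (h1 k + \<nu> * \<theta> k + \<beta> * SV1) + (1 - u k) * (h0 k + \<beta> * SV0) - V S \<nu> k"
        unfolding sQ by (simp add: D_def Wk' algebra_simps)
      then show "\<beta> * (\<Sum>j\<in>UNIV. pol_P P0 P1 u k j * D j) \<le> D k" using Vk' by linarith
    qed
    from stoch_min[OF polP_stoch[OF u] bb this] have "0 \<le> D i" .
    then show ?thesis unfolding D_def W_def by simp
  qed
  have adm: "admissible N1 (S_active N1 S)" unfolding admissible_def S_active_def by auto
  have "V S \<nu> i \<le> vopt N1 \<beta> P0 P1 h0 h1 \<theta> \<nu> i"
    unfolding vopt_def by (rule cINF_greatest) (use adm low in auto)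
  moreover have "vopt N1 \<beta> P0 P1 h0 h1 \<theta> \<nu> i \<le> V S \<nu> i"
    unfolding vopt_def V_def
    by (rule cINF_lower[OF _ CollectI[of "admissible N1", OF adm]])
      (use low in \<open>auto intro!: bdd_belowI2\<close>)
  ultimately show "vopt N1 \<beta> P0 P1 h0 h1 \<theta> \<nu> i = V S \<nu> i" by simp
qed

lemma S_charge_eq:
  assumes "vopt N1 \<beta> P0 P1 h0 h1 \<theta> \<nu> = V S \<nu>"
  shows "S_charge N01 N1 \<beta> P0 P1 h0 h1 \<theta> \<nu> = {j \<in> N01. Dl S \<nu> j \<le> 0}"
  unfolding S_charge_def Let_def assms Dl_def Act_def Pas_def by auto

lemma V_equal:
  assumes iS: "i \<in> S" and iN: "i \<in> N01" and D0: "Dl S \<nu> i = 0"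
  shows "V (S - {i}) \<nu> k = V S \<nu> k"
proof -
  have bb: "0 \<le> \<beta>" "\<beta> < 1" using b0 b1 by auto
  define Q where "Q k = (if k \<in> (S - {i}) \<union> N1 then P1 k else P0 k)" for k
  have Qn: "\<forall>k j. 0 \<le> Q k j" using P0n P1n unfolding Q_def by auto
  have Qs: "\<forall>k. (\<Sum>j\<in>UNIV. Q k j) = 1" using P0s P1s unfolding Q_def by auto
  define D where "D k = V (S - {i}) \<nu> k - V S \<nu> k" for k
  have iN1: "i \<notin> N1" using iN part1 by auto
  have "\<forall>k. D k = \<beta> * (\<Sum>j\<in>UNIV. Q k j * D j)"
  proof
    fix k
    show "D k = \<beta> * (\<Sum>j\<in>UNIV. Q k j * D j)"
    proof (cases "k \<in> (S - {i}) \<union> N1")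
      case True
      then have "k \<in> S \<union> N1" by auto
      then have "D k = Act (S - {i}) \<nu> k - Act S \<nu> k"
        unfolding D_def using V_eq[of "S - {i}" \<nu> k] V_eq[of S \<nu> k] True by (simp only: if_P)
      moreover have "Q k = P1 k" unfolding Q_def using True by auto
      moreover have "Act (S - {i}) \<nu> k - Act S \<nu> k = \<beta> * (\<Sum>j\<in>UNIV. P1 k j * D j)"
        unfolding Act_def D_def by (simp add: algebra_simps sum_subtractf)
      ultimately show ?thesis by simp
    next
      case False
      have "V S \<nu> k = Pas S \<nu> k"
      proof (cases "k = i")
        case True
        then show ?thesis using V_eq[of S \<nu> k] iS D0 unfolding Dl_def by simp
      next
        case False
        then show ?thesis using V_eq[of S \<nu> k] \<open>k \<notin> (S - {i}) \<union> N1\<close> by simp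
      qed
      moreover have "V (S - {i}) \<nu> k = Pas (S - {i}) \<nu> k"
        using V_eq[of "S - {i}" \<nu> k] unfolding if_not_P[OF False] .
      ultimately have "D k = Pas (S - {i}) \<nu> k - Pas S \<nu> k"
        unfolding D_def by simp
      moreover have "Q k = P0 k" unfolding Q_def using False by auto
      moreover have "Pas (S - {i}) \<nu> k - Pas S \<nu> k = \<beta> * (\<Sum>j\<in>UNIV. P0 k j * D j)"
        unfolding Pas_def D_def by (simp add: algebra_simps sum_subtractf)
      ultimately show ?thesis by simp
    qed
  qed
  from stoch_unique[OF Qn Qs bb this] show ?thesis unfolding D_def by simp
qed

lemma V_act: "i \<in> S \<union> N1 \<Longrightarrow> V S \<nu> i = Act S \<nu> i"
  using V_eq[of S \<nu> i] by (simp only: if_P)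

lemma V_pas: "i \<notin> S \<union> N1 \<Longrightarrow> V S \<nu> i = Pas S \<nu> i"
  using V_eq[of S \<nu> i] by (simp only: if_not_P if_False)

lemma V_N01: "V N01 0 i = h1 i + \<beta> * (\<Sum>j\<in>UNIV. P1 i j * V N01 0 j)"
proof -
  have "i \<in> N01 \<union> N1" using part2 by simp
  from V_act[OF this, of 0] show ?thesis unfolding Act_def by (simp only: mult_zero_left add_0_right)
qed

lemma resolvent_N01: "resolvent \<beta> P1 h1 = V N01 0"
proof -
  have bb: "0 \<le> \<beta>" "\<beta> < 1" using b0 b1 by auto
  have eq: "\<forall>i. V N01 0 i - \<beta> * (\<Sum>j\<in>UNIV. P1 i j * V N01 0 j) = h1 i"
    using V_N01 by (metis add_diff_cancel_right')
  show ?thesis unfolding resolvent_def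
  proof (rule the_equality)
    fix x assume x: "\<forall>i. x i - \<beta> * (\<Sum>j\<in>UNIV. P1 i j * x j) = h1 i"
    have "\<forall>i. (x i - V N01 0 i) = \<beta> * (\<Sum>j\<in>UNIV. P1 i j * (x j - V N01 0 j))"
    proof
      fix i
      have "\<beta> * (\<Sum>j\<in>UNIV. P1 i j * (x j - V N01 0 j)) = \<beta> * (\<Sum>j\<in>UNIV. P1 i j * x j) - \<beta> * (\<Sum>j\<in>UNIV. P1 i j * V N01 0 j)"
        by (simp add: algebra_simps sum_subtractf)
      then show "(x i - V N01 0 i) = \<beta> * (\<Sum>j\<in>UNIV. P1 i j * (x j - V N01 0 j))"
        using x[rule_format, of i] eq[rule_format, of i] by linarith
    qed
    from stoch_unique[OF P1n P1s bb this] show "x = V N01 0" by auto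
  qed (use eq in blast)
qed

lemma Dl_N01: "j \<in> N01 \<Longrightarrow> Dl N01 0 j = - hhat0 \<beta> P0 P1 h0 h1 j"
  unfolding hhat0_def Let_def resolvent_N01 Dl_def Act_def Pas_def
  using V_N01[of j] by simp

end


lemma set_system_top:
  fixes N01 :: "'s::finite set"
  assumes F: "set_system N01 F"
  shows "N01 \<in> F"
proof (rule ccontr)
  assume nF: "N01 \<notin> F"
  have FP: "F \<subseteq> Pow N01" and e: "{} \<in> F" and aug: "\<forall>S\<in>F. S \<noteq> N01 \<longrightarrow> (\<exists>j\<in>N01 - S. insert j S \<in> F)"
    using F unfolding set_system_def by auto
  have finF: "finite F" by simp
  define m where "m = Max (card ` F)"
  have "m \<in> card ` F" unfolding m_def using finF e by (intro Max_in) auto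
  then obtain S where S: "S \<in> F" "card S = m" by auto
  have "S \<noteq> N01" using S nF by auto
  then obtain j where j: "j \<in> N01 - S" "insert j S \<in> F" using aug S by auto
  have "card (insert j S) \<le> m" unfolding m_def by (rule Max_ge, simp, rule imageI, rule j(2))
  moreover have "card (insert j S) = Suc m" using j S by simp
  ultimately show False by simp
qed

theorem theorem9:
  fixes N01 N1 :: "'s::finite set"
    and \<beta> :: real
    and P0 P1 :: "'s \<Rightarrow> 's \<Rightarrow> real"
    and h0 h1 \<theta> :: "'s \<Rightarrow> real"
    and F :: "'s set set"
    and \<pi> :: "nat \<Rightarrow> 's" and y :: "nat \<Rightarrow> real" and \<nu>idx :: "'s \<Rightarrow> real"
  assumes partition: "N01 \<inter> N1 = {}" "N01 \<union> N1 = UNIV"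
    and beta: "0 < \<beta>" "\<beta> < 1"
    and P0_stoch: "\<forall>i j. 0 \<le> P0 i j" "\<forall>i. (\<Sum>j\<in>UNIV. P0 i j) = 1"
    and P1_stoch: "\<forall>i j. 0 \<le> P1 i j" "\<forall>i. (\<Sum>j\<in>UNIV. P1 i j) = 1"
    and uncontrollable: "\<forall>i\<in>N1. \<forall>j. P1 i j = P0 i j"
    and theta_pos: "\<forall>j. 0 < \<theta> j"
    and F: "set_system N01 F"
    and PCL_i: "\<forall>S\<in>F. \<forall>j\<in>N01. 0 < marg_work N01 N1 \<beta> P0 P1 \<theta> S j"
    and run: "adaptive_greedy_run N01 F (marg_work N01 N1 \<beta> P0 P1 \<theta>) (hhat0 \<beta> P0 P1 h0 h1) \<pi> y"
    and PCL_ii: "\<forall>k\<in>{1..<card N01}. ag_index y k \<le> ag_index y (Suc k)"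
    and index: "\<forall>k\<in>{1..card N01}. \<nu>idx (\<pi> k) = ag_index y k"
  shows "\<forall>\<nu>::real. S_charge N01 N1 \<beta> P0 P1 h0 h1 \<theta> \<nu> = {j \<in> N01. \<nu> \<le> \<nu>idx j}
                  \<and> S_charge N01 N1 \<beta> P0 P1 h0 h1 \<theta> \<nu> \<in> F"
proof -
  interpret rb N01 N1 \<beta> P0 P1 h0 h1 \<theta>
    by unfold_locales (use partition beta P0_stoch P1_stoch uncontrollable in auto)
  define n where "n = card N01"
  define w where "w = marg_work N01 N1 \<beta> P0 P1 \<theta>"
  define c where "c = hhat0 \<beta> P0 P1 h0 h1"
  define A where "A = ag_set N01 \<pi>"
  define nk where "nk = ag_index y"
  define G where "G k j = c j - (\<Sum>l\<in>{1..<k}. y l * w (A l) j)" for k j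
  have runk: "\<pi> k \<in> inner_boundary F (A k) \<and> y k = G k (\<pi> k) / w (A k) (\<pi> k)"
    if "k \<in> {1..n}" for k
    using run that unfolding adaptive_greedy_run_def Let_def n_def A_def G_def w_def c_def by auto
  have piA: "\<pi> k \<in> A k" and AmF: "A k - {\<pi> k} \<in> F" if "k \<in> {1..n}" for k
    using runk[OF that] unfolding inner_boundary_def by auto
  have A_Suc: "A (Suc k) = A k - {\<pi> k}" if "1 \<le> k" for k
  proof -
    have "{1..<Suc k} = insert k {1..<k}" using that by auto
    then show ?thesis unfolding A_def ag_set_def by auto
  qed
  have A1: "A 1 = N01" by (simp add: A_def ag_set_def)
  have AN: "A k \<subseteq> N01" for k by (auto simp: A_def ag_set_def)
  have piN: "\<pi> k \<in> N01" if "k \<in> {1..n}" for k using piA[OF that] AN by auto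
  have inj: "inj_on \<pi> {1..n}"
  proof (rule inj_onI)
    fix a b assume a: "a \<in> {1..n}" and b: "b \<in> {1..n}" and e: "\<pi> a = \<pi> b"
    show "a = b"
    proof (rule ccontr)
      assume "a \<noteq> b"
      then consider "a < b" | "b < a" by linarith
      then show False
      proof cases
        case 1
        then have "\<pi> a \<in> \<pi> ` {1..<b}" using a by auto
        then show False using piA[OF b] e unfolding A_def ag_set_def by auto
      next
        case 2
        then have "\<pi> b \<in> \<pi> ` {1..<a}" using b by auto
        then show False using piA[OF a] e unfolding A_def ag_set_def by auto
      qed
    qed
  qed
  have img: "\<pi> ` {1..n} = N01"
  proof (rule card_subset_eq)
    show "finite N01" by simp
    show "\<pi> ` {1..n} \<subseteq> N01" using piN by auto
    show "card (\<pi> ` {1..n}) = card N01" using card_image[OF inj] n_def by simp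
  qed
  have N01F: "N01 \<in> F" by (rule set_system_top[OF F])
  have AF: "A k \<in> F" if "1 \<le> k" "k \<le> n + 1" for k
    using that
  proof (induction k rule: nat_induct_at_least)
    case base
    then show ?case using A1 N01F by simp
  next
    case (Suc k)
    then show ?case using A_Suc[of k] AmF[of k] by auto
  qed
  have wpos: "0 < w (A k) j" if "1 \<le> k" "k \<le> n + 1" "j \<in> N01" for k j
    using PCL_i AF[OF that(1,2)] that(3) unfolding w_def by auto
  have nk0: "nk 0 = 0" by (simp add: nk_def ag_index_def)
  have nkS: "nk (Suc k) = nk k + y (Suc k)" for k by (simp add: nk_def ag_index_def)
  have GS: "G (Suc k) j = G k j - y k * w (A k) j" if "1 \<le> k" for k j
  proof -
    have "{1..<Suc k} = insert k {1..<k}" using that by auto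
    then show ?thesis unfolding G_def by simp
  qed
  have G1: "G 1 j = c j" for j by (simp add: G_def)
  have yk: "G k (\<pi> k) = y k * w (A k) (\<pi> k)" if "k \<in> {1..n}" for k
  proof -
    have "0 < w (A k) (\<pi> k)" using wpos[of k "\<pi> k"] that piN[OF that] by auto
    then show ?thesis using runk[OF that] by (simp add: field_simps)
  qed
  have mono: "nk a \<le> nk b" if "1 \<le> a" "a \<le> b" "b \<le> n" for a b
    using that(2,3)
  proof (induction b rule: dec_induct)
    case base
    then show ?case by simp
  next
    case (step m)
    then have "m \<in> {1..<card N01}" using that(1) n_def by auto
    then show ?case using PCL_ii step unfolding nk_def by force
  qed
  have CF: "\<forall>j\<in>N01. \<forall>\<nu>. Dl (A k) \<nu> j = (\<nu> - nk (k - 1)) * w (A k) j - G k j"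
    if "1 \<le> k" "k \<le> n + 1" for k
    using that
  proof (induction k rule: nat_induct_at_least)
    case base
    show ?case
    proof (intro ballI allI)
      fix j \<nu> assume j: "j \<in> N01"
      have "Dl (A 1) \<nu> j = Dl N01 0 j + (\<nu> - 0) * w N01 j"
        unfolding A1 w_def by (rule Dl_affine[OF j])
      then show "Dl (A 1) \<nu> j = (\<nu> - nk (1 - 1)) * w (A 1) j - G 1 j"
        using Dl_N01[OF j] unfolding G1 c_def A1 by (simp add: nk0)
    qed
  next
    case (Suc k)
    have kn: "k \<in> {1..n}" using Suc by auto
    note IH = Suc.IH[OF _] 
    have IHk: "\<forall>j\<in>N01. \<forall>\<nu>. Dl (A k) \<nu> j = (\<nu> - nk (k - 1)) * w (A k) j - G k j"
      using Suc by auto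
    have nkk: "nk k = nk (k - 1) + y k" using nkS[of "k - 1"] Suc(1) by simp
    define i where "i = \<pi> k"
    have iA: "i \<in> A k" and iN: "i \<in> N01" using piA[OF kn] piN[OF kn] i_def by auto
    have "Dl (A k) (nk k) i = (nk k - nk (k - 1)) * w (A k) i - G k i" using IHk iN by blast
    then have D0: "Dl (A k) (nk k) i = 0"
      using yk[OF kn] nkk unfolding i_def by (simp add: algebra_simps)
    have Veq: "V (A (Suc k)) (nk k) = V (A k) (nk k)"
      using V_equal[OF iA iN D0] A_Suc[of k] Suc(1) unfolding i_def by auto
    have Dleq: "Dl (A (Suc k)) (nk k) j = Dl (A k) (nk k) j" for j
      unfolding Dl_def Act_def Pas_def Veq ..
    show ?case
    proof (intro ballI allI)
      fix j \<nu> assume j: "j \<in> N01"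
      have "Dl (A (Suc k)) \<nu> j = Dl (A (Suc k)) (nk k) j + (\<nu> - nk k) * w (A (Suc k)) j"
        unfolding w_def by (rule Dl_affine[OF j])
      also have "\<dots> = (nk k - nk (k - 1)) * w (A k) j - G k j + (\<nu> - nk k) * w (A (Suc k)) j"
        using Dleq IHk j by simp
      also have "\<dots> = (\<nu> - nk (Suc k - 1)) * w (A (Suc k)) j - G (Suc k) j"
        using GS[of k j] Suc(1) nkk by (simp add: algebra_simps)
      finally show "Dl (A (Suc k)) \<nu> j = (\<nu> - nk (Suc k - 1)) * w (A (Suc k)) j - G (Suc k) j" .
    qed
  qed
  have CF': "Dl (A k) \<nu> j = (\<nu> - nk (k - 1)) * w (A k) j - G k j"
    if "1 \<le> k" "k \<le> n + 1" "j \<in> N01" for k j \<nu>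
    using CF[OF that(1,2)] that(3) by blast
  have PA: "\<forall>\<nu>. \<nu> \<le> nk l \<longrightarrow> Dl (A l) \<nu> (\<pi> m) \<le> 0"
    if m: "m \<in> {1..n}" and l: "1 \<le> l" "l \<le> m" for m l
    using l(2,1)
  proof (induction l rule: inc_induct)
    case base
    show ?case
    proof (intro allI impI)
      fix \<nu> :: real assume nu: "\<nu> \<le> nk m"
      have nkm: "nk m = nk (m - 1) + y m" using nkS[of "m - 1"] m by simp
      have "Dl (A m) \<nu> (\<pi> m) = (\<nu> - nk m) * w (A m) (\<pi> m)"
        using CF'[of m "\<pi> m" \<nu>] m piN[OF m] yk[OF m] nkm by (simp add: algebra_simps)
      also have "\<dots> \<le> 0" using nu wpos[of m "\<pi> m"] m piN[OF m]
        by (intro mult_nonpos_nonneg) auto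
      finally show "Dl (A m) \<nu> (\<pi> m) \<le> 0" .
    qed
  next
    case (step l)
    show ?case
    proof (intro allI impI)
      fix \<nu> :: real assume nu: "\<nu> \<le> nk l"
      have l1: "1 \<le> l" using step by simp
      have nkl: "nk l = nk (l - 1) + y l" using nkS[of "l - 1"] l1 by simp
      have jN: "\<pi> m \<in> N01" using piN[OF m] .
      have "nk l \<le> nk (Suc l)" using mono[of l "Suc l"] l1 step m by auto
      then have "Dl (A (Suc l)) (nk l) (\<pi> m) \<le> 0" using step by auto
      then have g: "- G (Suc l) (\<pi> m) \<le> 0"
        using CF'[of "Suc l" "\<pi> m" "nk l"] step m jN by auto
      have "Dl (A l) \<nu> (\<pi> m) = (\<nu> - nk l) * w (A l) (\<pi> m) - G (Suc l) (\<pi> m)"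
        using CF'[of l "\<pi> m" \<nu>] l1 step m jN GS[of l "\<pi> m"] nkl by (simp add: algebra_simps)
      also have "\<dots> \<le> 0"
      proof -
        have "(\<nu> - nk l) * w (A l) (\<pi> m) \<le> 0"
          using nu wpos[of l "\<pi> m"] l1 step m jN by (intro mult_nonpos_nonneg) auto
        then show ?thesis using g by linarith
      qed
      finally show "Dl (A l) \<nu> (\<pi> m) \<le> 0" .
    qed
  qed
  have PB: "(\<forall>\<nu>. nk (l - 1) \<le> \<nu> \<longrightarrow> 0 \<le> Dl (A l) \<nu> (\<pi> m))
          \<and> (\<forall>\<nu>. nk (l - 1) < \<nu> \<longrightarrow> 0 < Dl (A l) \<nu> (\<pi> m))"
    if m: "m \<in> {1..n}" and l: "Suc m \<le> l" "l \<le> n + 1" for m l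
    using l
  proof (induction l rule: dec_induct)
    case base
    have jN: "\<pi> m \<in> N01" using piN[OF m] .
    have G0: "G (Suc m) (\<pi> m) = 0" using GS[of m "\<pi> m"] yk[OF m] m by simp
    have e: "Dl (A (Suc m)) \<nu> (\<pi> m) = (\<nu> - nk m) * w (A (Suc m)) (\<pi> m)" for \<nu>
      using CF'[of "Suc m" "\<pi> m" \<nu>] base m jN G0 by simp
    have wp: "0 < w (A (Suc m)) (\<pi> m)" using wpos[of "Suc m" "\<pi> m"] base m jN by auto
    show ?case using e wp by (auto intro: mult_nonneg_nonneg mult_pos_pos)
  next
    case (step l)
    have jN: "\<pi> m \<in> N01" using piN[OF m] .
    have ln: "l \<le> n" "2 \<le> l" using step m by auto
    have nkl: "nk l = nk (l - 1) + y l" using nkS[of "l - 1"] ln by simp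
    have "nk (l - 1) \<le> nk l" using mono[of "l - 1" l] ln by auto
    then have "0 \<le> Dl (A l) (nk l) (\<pi> m)" using step ln by auto
    moreover have "Dl (A l) (nk l) (\<pi> m) = - G (Suc l) (\<pi> m)"
      using CF'[of l "\<pi> m" "nk l"] ln jN GS[of l "\<pi> m"] nkl by (simp add: algebra_simps)
    ultimately have g: "0 \<le> - G (Suc l) (\<pi> m)" by simp
    have e: "Dl (A (Suc l)) \<nu> (\<pi> m) = (\<nu> - nk l) * w (A (Suc l)) (\<pi> m) - G (Suc l) (\<pi> m)" for \<nu>
      using CF'[of "Suc l" "\<pi> m" \<nu>] ln step jN by simp
    have wp: "0 < w (A (Suc l)) (\<pi> m)" using wpos[of "Suc l" "\<pi> m"] ln step jN by auto
    show ?case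
    proof (intro conjI allI impI)
      fix \<nu> assume "nk (Suc l - 1) \<le> \<nu>"
      then have "0 \<le> (\<nu> - nk l) * w (A (Suc l)) (\<pi> m)" using wp by simp
      then show "0 \<le> Dl (A (Suc l)) \<nu> (\<pi> m)" using e g by simp
    next
      fix \<nu> assume "nk (Suc l - 1) < \<nu>"
      then have "0 < (\<nu> - nk l) * w (A (Suc l)) (\<pi> m)" using wp by simp
      then show "0 < Dl (A (Suc l)) \<nu> (\<pi> m)" using e g by simp
    qed
  qed
  show ?thesis
  proof
    fix \<nu> :: real
    define k where "k = (LEAST k. 1 \<le> k \<and> (k = n + 1 \<or> \<nu> \<le> nk k))"
    have kP: "1 \<le> k \<and> (k = n + 1 \<or> \<nu> \<le> nk k)"
      unfolding k_def by (rule LeastI[of _ "n + 1"]) simp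
    have kle: "k \<le> n + 1" unfolding k_def by (rule Least_le) simp
    have kprev: "nk (k - 1) < \<nu>" if "1 < k"
    proof -
      have "\<not> (1 \<le> k - 1 \<and> (k - 1 = n + 1 \<or> \<nu> \<le> nk (k - 1)))"
        unfolding k_def by (rule not_less_Least) (use that k_def in simp)
      then show ?thesis using that kle by auto
    qed
    have key: "(j \<in> A k \<longleftrightarrow> Dl (A k) \<nu> j \<le> 0) \<and> (Dl (A k) \<nu> j \<le> 0 \<longleftrightarrow> \<nu> \<le> \<nu>idx j)"
      if j: "j \<in> N01" for j
    proof -
      obtain m where m: "m \<in> {1..n}" and jm: "j = \<pi> m" using img j by auto
      have idx: "\<nu>idx j = nk m" using index m jm unfolding nk_def n_def by auto
      show ?thesis
      proof (cases "k \<le> m")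
        case True
        have "j \<notin> \<pi> ` {1..<k}"
        proof
          assume "j \<in> \<pi> ` {1..<k}"
          then obtain m' where "m' \<in> {1..<k}" "\<pi> m' = \<pi> m" using jm by auto
          then show False using inj m True unfolding inj_on_def by force
        qed
        then have jA: "j \<in> A k" using j unfolding A_def ag_set_def by auto
        have kn: "k \<le> n" using True m by auto
        then have nu: "\<nu> \<le> nk k" using kP by auto
        have "Dl (A k) \<nu> j \<le> 0" using PA[OF m, of k] kP True nu jm by auto
        moreover have "\<nu> \<le> \<nu>idx j" using nu mono[of k m] kP True m idx by auto
        ultimately show ?thesis using jA by auto
      next
        case False
        then have "j \<in> \<pi> ` {1..<k}" using jm m by auto
        then have jA: "j \<notin> A k" unfolding A_def ag_set_def by auto
        have k1: "1 < k" using False m by auto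
        have nu: "nk (k - 1) < \<nu>" using kprev[OF k1] .
        have "0 < Dl (A k) \<nu> j" using PB[OF m, of k] False kle nu jm by auto
        moreover have "nk m \<le> nk (k - 1)" using mono[of m "k - 1"] m False kle by auto
        ultimately show ?thesis using jA nu idx by auto
      qed
    qed
    have bell: "\<forall>j\<in>N01. V (A k) \<nu> j \<le> Act (A k) \<nu> j \<and> V (A k) \<nu> j \<le> Pas (A k) \<nu> j"
    proof
      fix j assume j: "j \<in> N01"
      show "V (A k) \<nu> j \<le> Act (A k) \<nu> j \<and> V (A k) \<nu> j \<le> Pas (A k) \<nu> j"
      proof (cases "j \<in> A k")
        case True
        then have "V (A k) \<nu> j = Act (A k) \<nu> j" by (intro V_act) auto
        moreover have "Dl (A k) \<nu> j \<le> 0" using key[OF j] True by auto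
        ultimately show ?thesis unfolding Dl_def by auto
      next
        case False
        have "j \<notin> N1" using j partition by auto
        then have "V (A k) \<nu> j = Pas (A k) \<nu> j" using False by (intro V_pas) auto
        moreover have "\<not> Dl (A k) \<nu> j \<le> 0" using key[OF j] False by auto
        ultimately show ?thesis unfolding Dl_def by auto
      qed
    qed
    have SC: "S_charge N01 N1 \<beta> P0 P1 h0 h1 \<theta> \<nu> = {j \<in> N01. Dl (A k) \<nu> j \<le> 0}"
      by (rule S_charge_eq[OF bellman[OF bell]])
    have e1: "{j \<in> N01. Dl (A k) \<nu> j \<le> 0} = {j \<in> N01. \<nu> \<le> \<nu>idx j}" using key by auto
    have e2: "{j \<in> N01. Dl (A k) \<nu> j \<le> 0} = A k" using key AN by auto
    show "S_charge N01 N1 \<beta> P0 P1 h0 h1 \<theta> \<nu> = {j \<in> N01. \<nu> \<le> \<nu>idx j}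
                  \<and> S_charge N01 N1 \<beta> P0 P1 h0 h1 \<theta> \<nu> \<in> F"
      using SC e1 e2 AF[of k] kP kle by auto
  qed
qed

end
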